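(* Let $\mathcal U$ be a balanced critical update family, $\alpha=\alpha(\mathcal U)$, and $\mathcal S_B$, $\rho$ as in the context. Let $D$ be an $\mathcal S_B$-droplet and let $Y\subset\mathbb Z^2$ have $|Y|\le\alpha-1$. Then $\|x-Y\|\le\rho$ for every $x\in[D\cup Y]\setminus D$.
   Context: Update family $\mathcal U$: finite collection of finite subsets of $\mathbb Z^2\setminus\{0\}$, $A_{t+1}=A_t\cup\{x:x+X\subset A_t,\ X\in\mathcal U\}$, $[A]=\bigcup_tA_t$. $\mathbb H_u=\{x\in\mathbb Z^2:\langle x,u\rangle<0\}$, $\mathbb H_u(a)=\{x\in\mathbb Z^2:\langle x-a,u\rangle<0\}$; $u$ stable if $[\mathbb H_u]=\mathbb H_u$. For rational $u$, $\ell_u=\{x:\langle x,u\rangle=0\}$, $\ell_u^\pm$ = origin plus sites of $\ell_u$ right/left of the origin looking in direction $u$, $\alpha^\pm(u)$ = minimal $|Z|$ with $[\mathbb H_u\cup Z]\cap\ell_u^\pm$ infinite, $\bar\alpha(u)=\min\{\alpha^+(u),\alpha^-(u)\}$; $\alpha(u)=\bar\alpha(u)$ if both are finite, else $\infty$; $\alpha(\mathcal U)=\min_C\sup_{u\in C}\alpha(u)$ over open semicircles. Critical and balanced: $1\le\alpha(\mathcal U)<\infty$ and there is a closed semicircle on which $\alpha(u)\le\alpha(\mathcal U)$. $\mathcal S_B$ is a fixed finite set of stable directions with $\bar\alpha(u)\ge\alpha$ for all $u\in\mathcal S_B$ and meeting every open semicircle. For $\mathcal T\subset S^1$ a $\mathcal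 T$-droplet is a non-empty set $\bigcap_{u\in\mathcal T}\mathbb H_u(a_u)$ with $a_u\in\mathbb Z^2$. $\rho:=\max\{\|y-Z\|: u\in\mathcal S_B,\ Z\subset\mathbb Z^2,\ |Z|=\alpha-1,\ y\in[\mathbb H_u\cup Z]\setminus\mathbb H_u\}$ (finite), where $\|x-Y\|=\min_{y\in Y}\|x-y\|$ is Euclidean. *)

theory Defs
  imports Complex_Main "HOL-Library.Extended_Nat"
begin

type_synonym site = "int \<times> int"
type_synonym dir = "real \<times> real"

definition S1 :: "dir set" where
  "S1 = {u. (fst u)^2 + (snd u)^2 = 1}"

definition ipr :: "dir \<Rightarrow> dir \<Rightarrow> real" where
  "ipr v u = fst v * fst u + snd v * snd u"

definition ip :: "site \<Rightarrow> dir \<Rightarrow> real" where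
  "ip x u = real_of_int (fst x) * fst u + real_of_int (snd x) * snd u"

definition update_family :: "site set set \<Rightarrow> bool" where
  "update_family U \<longleftrightarrow> finite U \<and> (\<forall>X\<in>U. finite X \<and> (0,0) \<notin> X)"

definition bp_step :: "site set set \<Rightarrow> site set \<Rightarrow> site set" where
  "bp_step U A = A \<union> {x. \<exists>X\<in>U. (\<lambda>y. (fst x + fst y, snd x + snd y)) ` X \<subseteq> A}"

definition bp_closure :: "site set set \<Rightarrow> site set \<Rightarrow> site set" where
  "bp_closure U A = (\<Union>t. (bp_step U ^^ t) A)"

definition H :: "dir \<Rightarrow> site set" where
  "H u = {x. ip x u < 0}"

definition Hs :: "dir \<Rightarrow> site \<Rightarrow> site set" where
  "Hs u a = {x. ip (fst x - fst a, snd x - snd a) u < 0}"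

definition stable :: "site set set \<Rightarrow> dir \<Rightarrow> bool" where
  "stable U u \<longleftrightarrow> u \<in> S1 \<and> bp_closure U (H u) = H u"

definition rational_dir :: "dir \<Rightarrow> bool" where
  "rational_dir u \<longleftrightarrow> (\<exists>p q :: int. (p, q) \<noteq> (0, 0) \<and>
     u = (real_of_int p / sqrt (real_of_int (p^2 + q^2)), real_of_int q / sqrt (real_of_int (p^2 + q^2))))"

text \<open>Sites of the line l_u to the right (+) / left (-) of the origin when looking in direction u,
  together with the origin.\<close>
definition lplus :: "dir \<Rightarrow> site set" where
  "lplus u = {x. ip x u = 0 \<and> ip x (snd u, - fst u) \<ge> 0}"

definition lminus :: "dir \<Rightarrow> site set" where
  "lminus u = {x. ip x u = 0 \<and> ip x (snd u, - fst u) \<le> 0}"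

definition alpha_side :: "site set set \<Rightarrow> site set \<Rightarrow> dir \<Rightarrow> enat" where
  "alpha_side U L u = Inf {enat (card Z) | Z. finite Z \<and> infinite (bp_closure U (H u \<union> Z) \<inter> L)}"

definition alpha_plus :: "site set set \<Rightarrow> dir \<Rightarrow> enat" where
  "alpha_plus U u = alpha_side U (lplus u) u"

definition alpha_minus :: "site set set \<Rightarrow> dir \<Rightarrow> enat" where
  "alpha_minus U u = alpha_side U (lminus u) u"

definition alpha_bar :: "site set set \<Rightarrow> dir \<Rightarrow> enat" where
  "alpha_bar U u = min (alpha_plus U u) (alpha_minus U u)"

definition alpha_dir :: "site set set \<Rightarrow> dir \<Rightarrow> enat" where
  "alpha_dir U u = (if alpha_plus U u < \<infinity> \<and> alpha_minus U u < \<infinity> then alpha_bar U u else \<infinity>)"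

definition alpha_U :: "site set set \<Rightarrow> enat" where
  "alpha_U U = (INF w\<in>S1. SUP u\<in>{u\<in>S1. rational_dir u \<and> ipr u w > 0}. alpha_dir U u)"

definition critical_balanced :: "site set set \<Rightarrow> bool" where
  "critical_balanced U \<longleftrightarrow> 1 \<le> alpha_U U \<and> alpha_U U < \<infinity> \<and>
     (\<exists>w\<in>S1. \<forall>u\<in>S1. rational_dir u \<and> ipr u w \<ge> 0 \<longrightarrow> alpha_dir U u \<le> alpha_U U)"

definition sdist :: "site \<Rightarrow> site \<Rightarrow> real" where
  "sdist x y = sqrt (real_of_int ((fst x - fst y)^2 + (snd x - snd y)^2))"

definition setdist :: "site \<Rightarrow> site set \<Rightarrow> real" where
  "setdist x Y = Min ((sdist x) ` Y)"

definition rho :: "site set set \<Rightarrow> dir set \<Rightarrow> nat \<Rightarrow> real" where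
  "rho U SB a = Sup {setdist y Z | u Z y. u \<in> SB \<and> finite Z \<and> card Z = a - 1 \<and>
                       y \<in> bp_closure U (H u \<union> Z) - H u}"

definition droplet :: "dir set \<Rightarrow> site set \<Rightarrow> bool" where
  "droplet T D \<longleftrightarrow> D \<noteq> {} \<and> (\<exists>a :: dir \<Rightarrow> site. D = (\<Inter>u\<in>T. Hs u (a u)))"

end

theory Submission
  imports Defs "HOL-Library.Product_Plus" "HOL-Analysis.Analysis"
begin


definition closedU :: "site set set \<Rightarrow> site set \<Rightarrow> bool" where
  "closedU U C \<longleftrightarrow> (\<forall>x. \<forall>X\<in>U. (\<lambda>y. x + y) ` X \<subseteq> C \<longrightarrow> x \<in> C)"

lemma pair_plus: "(fst x + fst y, snd x + snd y) = x + (y::site)"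
  by (simp add: prod_eq_iff)

lemma bp_step_alt: "bp_step U A = A \<union> {x. \<exists>X\<in>U. (\<lambda>y. x + y) ` X \<subseteq> A}"
  unfolding bp_step_def pair_plus ..

lemma step_incr: "A \<subseteq> bp_step U A"
  unfolding bp_step_def by blast

lemma iter_mono: "m \<le> n \<Longrightarrow> (bp_step U ^^ m) A \<subseteq> (bp_step U ^^ n) A"
proof (rule lift_Suc_mono_le[where f="\<lambda>n. (bp_step U ^^ n) A"])
  fix n show "(bp_step U ^^ n) A \<subseteq> (bp_step U ^^ Suc n) A"
    using step_incr[of "(bp_step U ^^ n) A" U] by simp
qed

lemma sub_closure: "A \<subseteq> bp_closure U A"
proof
  fix x assume "x \<in> A"
  then have "x \<in> (bp_step U ^^ 0) A" by simp
  then show "x \<in> bp_closure U A" unfolding bp_closure_def by blast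
qed

lemma finite_choice_mono:
  assumes "finite X" "\<forall>y\<in>X. \<exists>t::nat. P y t" "\<And>y s t. P y s \<Longrightarrow> s \<le> t \<Longrightarrow> P y t"
  shows "\<exists>T. \<forall>y\<in>X. P y T"
  using assms(1,2)
proof (induction X rule: finite_induct)
  case empty then show ?case by simp
next
  case (insert x F)
  then obtain T where T: "\<forall>y\<in>F. P y T" by auto
  obtain s where s: "P x s" using insert by auto
  have "\<forall>y\<in>insert x F. P y (max T s)"
  proof
    fix y assume "y \<in> insert x F"
    then show "P y (max T s)"
    proof
      assume "y = x" then show ?thesis using s assms(3)[of x s "max T s"] by simp
    next
      assume "y \<in> F" then show ?thesis using T assms(3)[of y T "max T s"] by simp
    qed
  qed
  then show ?case by blast
qed

lemma bpc_closed:
  assumes "update_family U"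
  shows "closedU U (bp_closure U A)"
  unfolding closedU_def
proof (intro allI ballI impI)
  fix x X assume X: "X \<in> U" and sub: "(\<lambda>y. x + y) ` X \<subseteq> bp_closure U A"
  have fin: "finite X" using assms X unfolding update_family_def by auto
  have "\<forall>y\<in>X. \<exists>t. x + y \<in> (bp_step U ^^ t) A"
    using sub unfolding bp_closure_def by auto
  moreover have "\<And>y s t. x + y \<in> (bp_step U ^^ s) A \<Longrightarrow> s \<le> t \<Longrightarrow> x + y \<in> (bp_step U ^^ t) A"
    using iter_mono by blast
  ultimately obtain T where T: "\<forall>y\<in>X. x + y \<in> (bp_step U ^^ T) A"
    using finite_choice_mono[OF fin, of "\<lambda>y t. x + y \<in> (bp_step U ^^ t) A"]
    by blast
  then have "x \<in> bp_step U ((bp_step U ^^ T) A)" unfolding bp_step_alt using X by blast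
  then have "x \<in> (bp_step U ^^ Suc T) A" by simp
  then show "x \<in> bp_closure U A" unfolding bp_closure_def by blast
qed

lemma bpc_least:
  assumes "closedU U C" "A \<subseteq> C"
  shows "bp_closure U A \<subseteq> C"
proof -
  have "(bp_step U ^^ t) A \<subseteq> C" for t
  proof (induction t)
    case 0 then show ?case using assms by simp
  next
    case (Suc t)
    show ?case
    proof
      fix x assume "x \<in> (bp_step U ^^ Suc t) A"
      then have "x \<in> (bp_step U ^^ t) A \<or> (\<exists>X\<in>U. (+) x ` X \<subseteq> (bp_step U ^^ t) A)"
        by (simp add: bp_step_alt)
      then show "x \<in> C" using Suc assms(1) unfolding closedU_def by blast
    qed
  qed
  then show ?thesis unfolding bp_closure_def by blast
qed

lemma bpc_mono:
  assumes "update_family U" "A \<subseteq> B"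
  shows "bp_closure U A \<subseteq> bp_closure U B"
  by (rule bpc_least[OF bpc_closed[OF assms(1)]]) (use sub_closure[of B U] assms(2) in auto)

lemma closed_Int: "closedU U C1 \<Longrightarrow> closedU U C2 \<Longrightarrow> closedU U (C1 \<inter> C2)"
  unfolding closedU_def by (meson le_inf_iff IntI)

lemma closed_INT: "(\<And>i. i \<in> I \<Longrightarrow> closedU U (C i)) \<Longrightarrow> closedU U (\<Inter>i\<in>I. C i)"
  unfolding closedU_def by (meson INT_I le_INF_iff)

lemma closed_tr: "closedU U C \<Longrightarrow> closedU U ((\<lambda>x. x + v) ` C)"
  unfolding closedU_def
proof (intro allI ballI impI)
  fix x X assume c: "\<forall>x. \<forall>X\<in>U. (+) x ` X \<subseteq> C \<longrightarrow> x \<in> C" and X: "X \<in> U"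
    and s: "(+) x ` X \<subseteq> (\<lambda>x. x + v) ` C"
  have "(+) (x - v) ` X \<subseteq> C"
  proof
    fix z assume "z \<in> (+) (x - v) ` X"
    then obtain y where y: "y \<in> X" "z = x - v + y" by auto
    then have "x + y \<in> (\<lambda>x. x + v) ` C" using s by auto
    then obtain c where "c \<in> C" "x + y = c + v" by auto
    then show "z \<in> C" using y by (simp add: algebra_simps)
  qed
  then have "x - v \<in> C" using c X by blast
  then show "x \<in> (\<lambda>x. x + v) ` C" by (intro image_eqI[of _ _ "x - v"]) auto
qed

lemma bpc_tr_sub:
  assumes "update_family U"
  shows "bp_closure U ((\<lambda>x. x + v) ` A) \<subseteq> (\<lambda>x. x + v) ` bp_closure U A"
proof (rule bpc_least)
  show "closedU U ((\<lambda>x. x + v) ` bp_closure U A)"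
    by (rule closed_tr[OF bpc_closed[OF assms]])
  show "(\<lambda>x. x + v) ` A \<subseteq> (\<lambda>x. x + v) ` bp_closure U A"
    by (rule image_mono[OF sub_closure])
qed

lemma bpc_tr:
  assumes "update_family U"
  shows "bp_closure U ((\<lambda>x. x + v) ` A) = (\<lambda>x. x + v) ` bp_closure U A"
proof
  show "bp_closure U ((\<lambda>x. x + v) ` A) \<subseteq> (\<lambda>x. x + v) ` bp_closure U A"
    by (rule bpc_tr_sub[OF assms])
  have e: "(\<lambda>x. x + - v) ` ((\<lambda>x. x + v) ` A) = A" by (auto simp: image_image)
  have "bp_closure U A \<subseteq> (\<lambda>x. x + - v) ` bp_closure U ((\<lambda>x. x + v) ` A)"
    using bpc_tr_sub[OF assms, of "-v" "(\<lambda>x. x + v) ` A"] unfolding e .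
  then have "(\<lambda>x. x + v) ` bp_closure U A \<subseteq> (\<lambda>x. x + v) ` (\<lambda>x. x + - v) ` bp_closure U ((\<lambda>x. x + v) ` A)"
    by (rule image_mono)
  also have "\<dots> = bp_closure U ((\<lambda>x. x + v) ` A)" by (simp add: image_image)
  finally show "(\<lambda>x. x + v) ` bp_closure U A \<subseteq> bp_closure U ((\<lambda>x. x + v) ` A)" .
qed

lemma closed_closure_eq:
  assumes "update_family U" "bp_closure U C = C" shows "closedU U C"
  using bpc_closed[OF assms(1), of C] assms(2) by simp

lemma closed_union_sep:
  assumes "closedU U C1" "closedU U C2"
    and "\<And>x X y1 y2. X \<in> U \<Longrightarrow> y1 \<in> X \<Longrightarrow> y2 \<in> X \<Longrightarrow> x + y1 \<in> C1 - C2 \<Longrightarrow> x + y2 \<in> C2 - C1 \<Longrightarrow> False"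
  shows "closedU U (C1 \<union> C2)"
  unfolding closedU_def
proof (intro allI ballI impI)
  fix x X assume X: "X \<in> U" and s: "(+) x ` X \<subseteq> C1 \<union> C2"
  show "x \<in> C1 \<union> C2"
  proof (cases "(+) x ` X \<subseteq> C1")
    case True then show ?thesis using assms(1) X unfolding closedU_def by blast
  next
    case False
    then obtain y1 where y1: "y1 \<in> X" "x + y1 \<notin> C1" by blast
    show ?thesis
    proof (cases "(+) x ` X \<subseteq> C2")
      case True then show ?thesis using assms(2) X unfolding closedU_def by blast
    next
      case False
      then obtain y2 where y2: "y2 \<in> X" "x + y2 \<notin> C2" by blast
      have "x + y1 \<in> C2 - C1" "x + y2 \<in> C1 - C2" using y1 y2 s by auto
      then show ?thesis using assms(3)[OF X y2(1) y1(1)] by blast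
    qed
  qed
qed



definition l1 :: "site \<Rightarrow> int" where "l1 x = \<bar>fst x\<bar> + \<bar>snd x\<bar>"

lemma l1_nonneg: "l1 x \<ge> 0" unfolding l1_def by simp
lemma l1_add: "l1 (x + y) \<le> l1 x + l1 y" unfolding l1_def by simp
lemma l1_minus: "l1 (- x) = l1 x" unfolding l1_def by simp
lemma l1_diff_comm: "l1 (x - y) = l1 (y - x)" unfolding l1_def by simp
lemma l1_tri: "l1 (x - z) \<le> l1 (x - y) + l1 (y - z)"
  using l1_add[of "x - y" "y - z"] by (simp add: algebra_simps)
lemma l1_zero_iff: "l1 x = 0 \<longleftrightarrow> x = 0" unfolding l1_def by (auto simp: prod_eq_iff)

lemma box_finite: "finite {x::site. l1 x \<le> M}"
proof -
  have "{x::site. l1 x \<le> M} \<subseteq> {-M..M} \<times> {-M..M}"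
    unfolding l1_def by auto
  then show ?thesis by (rule finite_subset) auto
qed

lemma finite_bounded_l1: "finite (A::site set) \<Longrightarrow> \<exists>M. \<forall>x\<in>A. l1 x \<le> M"
proof (induction A rule: finite_induct)
  case empty then show ?case by simp
next
  case (insert a A)
  then obtain M where "\<forall>x\<in>A. l1 x \<le> M" by auto
  then have "\<forall>x\<in>insert a A. l1 x \<le> max M (l1 a)" by auto
  then show ?case by blast
qed

lemma S1_bounds: "u \<in> S1 \<Longrightarrow> \<bar>fst u\<bar> \<le> 1 \<and> \<bar>snd u\<bar> \<le> 1"
  unfolding S1_def
proof (clarify)
  assume h: "(fst u)\<^sup>2 + (snd u)\<^sup>2 = 1"
  have "(fst u)\<^sup>2 \<le> 1" "(snd u)\<^sup>2 \<le> 1" using h by (smt (verit) zero_le_power2)+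
  then show "\<bar>fst u\<bar> \<le> 1 \<and> \<bar>snd u\<bar> \<le> 1" by (simp add: abs_square_le_1)
qed

lemma ip_add: "ip (x + y) u = ip x u + ip y u" unfolding ip_def by (simp add: algebra_simps)
lemma ip_diff: "ip (x - y) u = ip x u - ip y u" unfolding ip_def by (simp add: algebra_simps)
lemma ip_l1: assumes "u \<in> S1" shows "\<bar>ip x u\<bar> \<le> real_of_int (l1 x)"
proof -
  have b: "\<bar>fst u\<bar> \<le> 1" "\<bar>snd u\<bar> \<le> 1" using S1_bounds[OF assms] by auto
  have "\<bar>ip x u\<bar> \<le> \<bar>real_of_int (fst x)\<bar> * \<bar>fst u\<bar> + \<bar>real_of_int (snd x)\<bar> * \<bar>snd u\<bar>"
    unfolding ip_def by (metis abs_mult abs_triangle_ineq)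
  also have "\<dots> \<le> \<bar>real_of_int (fst x)\<bar> + \<bar>real_of_int (snd x)\<bar>"
    using b by (intro add_mono) (auto intro: mult_left_le)
  finally show ?thesis unfolding l1_def by simp
qed

lemma sdist_l1: "sdist x y \<le> real_of_int (l1 (x - y))"
proof -
  let ?a = "fst x - fst y" and ?b = "snd x - snd y"
  have "real_of_int (?a\<^sup>2 + ?b\<^sup>2) \<le> (real_of_int (\<bar>?a\<bar> + \<bar>?b\<bar>))\<^sup>2"
    by (simp add: power2_eq_square algebra_simps)
  then have "sqrt (real_of_int (?a\<^sup>2 + ?b\<^sup>2)) \<le> real_of_int (\<bar>?a\<bar> + \<bar>?b\<bar>)"
    by (intro real_le_lsqrt) simp_all
  then show ?thesis unfolding sdist_def l1_def by simp
qed

lemma Hs_tr: "Hs u a = (\<lambda>x. x + a) ` H u"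
proof
  show "Hs u a \<subseteq> (\<lambda>x. x + a) ` H u"
  proof
    fix x assume "x \<in> Hs u a"
    then have "x - a \<in> H u" unfolding Hs_def H_def ip_def by simp
    then show "x \<in> (\<lambda>x. x + a) ` H u" by (intro image_eqI[of _ _ "x - a"]) auto
  qed
  show "(\<lambda>x. x + a) ` H u \<subseteq> Hs u a" unfolding Hs_def H_def by auto
qed

lemma stable_closed: "update_family U \<Longrightarrow> stable U u \<Longrightarrow> closedU U (H u)"
  unfolding stable_def using closed_closure_eq by blast

lemma stable_closed_Hs: "update_family U \<Longrightarrow> stable U u \<Longrightarrow> closedU U (Hs u a)"
  unfolding Hs_tr by (rule closed_tr[OF stable_closed])

lemma rule_radius: "update_family U \<Longrightarrow> \<exists>r\<ge>0. \<forall>X\<in>U. \<forall>v\<in>X. l1 v \<le> r"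
proof -
  assume "update_family U"
  then have "finite (\<Union>U)" unfolding update_family_def by auto
  then obtain M where "\<forall>x\<in>\<Union>U. l1 x \<le> M" using finite_bounded_l1 by blast
  then have "\<forall>X\<in>U. \<forall>v\<in>X. l1 v \<le> max M 0" by (metis Union_iff max.coboundedI1)
  then show ?thesis by (intro exI[of _ "max M 0"]) simp
qed

lemma closed_union_l1:
  assumes "closedU U C1" "closedU U C2" "\<forall>X\<in>U. \<forall>v\<in>X. l1 v \<le> r"
    and "\<And>p q. p \<in> C1 - C2 \<Longrightarrow> q \<in> C2 - C1 \<Longrightarrow> l1 (p - q) > 2 * r"
  shows "closedU U (C1 \<union> C2)"
proof (rule closed_union_sep[OF assms(1,2)])
  fix x X y1 y2 assume X: "X \<in> U" "y1 \<in> X" "y2 \<in> X" and c: "x + y1 \<in> C1 - C2" "x + y2 \<in> C2 - C1"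
  have "l1 (x + y1 - (x + y2)) = l1 (y1 + - y2)" by (simp add: algebra_simps)
  also have "\<dots> \<le> l1 y1 + l1 (- y2)" by (rule l1_add)
  also have "\<dots> \<le> 2 * r"
  proof -
    have "l1 y1 \<le> r" "l1 y2 \<le> r" using assms(3) X by auto
    then show ?thesis by (simp add: l1_minus)
  qed
  finally show False using assms(4)[OF c] by simp
qed



lemma connect_or_split:
  fixes Z :: "site set" and z0 :: site and T :: int
  assumes fin: "finite Z" and z0: "z0 \<in> Z" and T: "T \<ge> 0"
  shows "(\<exists>K. K \<subseteq> Z \<and> K \<noteq> {} \<and> K \<noteq> Z \<and> (\<forall>k\<in>K. \<forall>k'\<in>Z - K. l1 (k - k') > T))
         \<or> (\<forall>z\<in>Z. l1 (z - z0) \<le> int (card Z) * T)"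
proof (rule disjCI)
  assume nosplit: "\<not> (\<forall>z\<in>Z. l1 (z - z0) \<le> int (card Z) * T)"
  show "\<exists>K. K \<subseteq> Z \<and> K \<noteq> {} \<and> K \<noteq> Z \<and> (\<forall>k\<in>K. \<forall>k'\<in>Z - K. l1 (k - k') > T)"
  proof (rule ccontr)
    assume ns: "\<not> ?thesis"
    define G where "G = rec_nat {z0} (\<lambda>n S. S \<union> {z\<in>Z. \<exists>g\<in>S. l1 (z - g) \<le> T})"
    have G0: "G 0 = {z0}" unfolding G_def by simp
    have GS: "G (Suc n) = G n \<union> {z\<in>Z. \<exists>g\<in>G n. l1 (z - g) \<le> T}" for n unfolding G_def by simp
    have sub: "G n \<subseteq> Z" for n by (induction n) (use z0 G0 GS in auto)
    have z0G: "z0 \<in> G n" for n by (induction n) (use G0 GS in auto)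
    have dist: "\<forall>g\<in>G n. l1 (g - z0) \<le> int n * T" for n
    proof (induction n)
      case 0 then show ?case using G0 by (simp add: l1_def)
    next
      case (Suc n)
      show ?case
      proof
        fix g assume "g \<in> G (Suc n)"
        then have "g \<in> G n \<or> (\<exists>h\<in>G n. l1 (g - h) \<le> T)" using GS by auto
        then show "l1 (g - z0) \<le> int (Suc n) * T"
        proof
          assume "g \<in> G n" then show ?thesis using Suc T by (auto simp: algebra_simps intro: order_trans)
        next
          assume "\<exists>h\<in>G n. l1 (g - h) \<le> T"
          then obtain h where h: "h \<in> G n" "l1 (g - h) \<le> T" by blast
          have "l1 (g - z0) \<le> l1 (g - h) + l1 (h - z0)" by (rule l1_tri)
          also have "\<dots> \<le> T + int n * T" using h Suc by auto
          finally show ?thesis by (simp add: algebra_simps)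
        qed
      qed
    qed
    have grow: "G n = Z \<or> card (G n) \<ge> n + 1" for n
    proof (induction n)
      case 0 then show ?case using G0 by simp
    next
      case (Suc n)
      show ?case
      proof (cases "G n = Z")
        case True
        then have "G (Suc n) = Z" using GS sub[of "Suc n"] by auto
        then show ?thesis by simp
      next
        case False
        then have c: "card (G n) \<ge> n + 1" using Suc by simp
        have "G n \<subseteq> Z" "G n \<noteq> {}" using sub z0G by auto
        with False ns obtain k k' where kk: "k \<in> G n" "k' \<in> Z - G n" "l1 (k - k') \<le> T"
          by (metis not_less)
        then have "l1 (k' - k) \<le> T" using l1_diff_comm[of k' k] by simp
        then have "k' \<in> G (Suc n)" using GS kk by blast
        then have "insert k' (G n) \<subseteq> G (Suc n)" using GS by auto
        moreover have "finite (G (Suc n))" using sub fin finite_subset by blast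
        ultimately have "card (insert k' (G n)) \<le> card (G (Suc n))" by (rule card_mono[rotated])
        moreover have "card (insert k' (G n)) = card (G n) + 1"
          using kk(2) finite_subset[OF sub fin] by simp
        ultimately show ?thesis using c by simp
      qed
    qed
    have "G (card Z) = Z"
    proof -
      have "card (G (card Z)) \<le> card Z" using card_mono[OF fin sub] by blast
      then show ?thesis using grow[of "card Z"] by simp
    qed
    then show False using nosplit dist[of "card Z"] by auto
  qed
qed



lemma S1_sphere: "S1 = sphere (0::real\<times>real) 1"
proof -
  have "w \<in> S1 \<longleftrightarrow> norm w = 1" for w :: "real \<times> real"
  proof -
    have "norm w = sqrt ((fst w)\<^sup>2 + (snd w)\<^sup>2)"
      by (cases w) (simp add: norm_Pair)
    then show ?thesis unfolding S1_def by auto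
  qed
  then show ?thesis by (auto simp: sphere_def dist_norm)
qed

lemma uniform_cover:
  assumes fin: "finite SB" and cov: "\<forall>w\<in>S1. \<exists>u\<in>SB. ipr u w > 0"
  shows "\<exists>\<delta>>0. \<forall>w\<in>S1. \<exists>u\<in>SB. ipr u w \<ge> \<delta>"
proof -
  define f where "f = (\<lambda>(u::dir, n::nat). {w. 1 / real (Suc n) < ipr u w})"
  have cpt: "compact S1" unfolding S1_sphere by (rule compact_sphere)
  have opn: "open (f c)" if "c \<in> SB \<times> UNIV" for c
  proof -
    obtain u n where c: "c = (u, n)" by (cases c)
    show ?thesis unfolding c f_def ipr_def
      by (simp, intro open_Collect_less continuous_intros)
  qed
  have cover: "S1 \<subseteq> (\<Union>c\<in>SB \<times> UNIV. f c)"
  proof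
    fix w assume "w \<in> S1"
    then obtain u where u: "u \<in> SB" "ipr u w > 0" using cov by blast
    then obtain n where "inverse (real (Suc n)) < ipr u w" using reals_Archimedean[OF u(2)] by blast
    then have "w \<in> f (u, n)" unfolding f_def by (simp add: field_simps)
    then show "w \<in> (\<Union>c\<in>SB \<times> UNIV. f c)" using u by blast
  qed
  obtain C' where C': "C' \<subseteq> SB \<times> UNIV" "finite C'" "S1 \<subseteq> (\<Union>c\<in>C'. f c)"
    using compactE_image[OF cpt opn cover] by blast
  obtain M where M: "\<forall>n\<in>snd ` C'. n \<le> M"
    using C'(2) finite_nat_set_iff_bounded_le by blast
  have "\<forall>w\<in>S1. \<exists>u\<in>SB. ipr u w \<ge> 1 / real (Suc M)"
  proof
    fix w assume "w \<in> S1"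
    then obtain u n where un: "(u, n) \<in> C'" "w \<in> f (u, n)" using C'(3) by auto
    have "n \<le> M" using M un by force
    then have "1 / real (Suc M) \<le> 1 / real (Suc n)" by (simp add: frac_le)
    also have "\<dots> < ipr u w" using un(2) unfolding f_def by simp
    finally show "\<exists>u\<in>SB. ipr u w \<ge> 1 / real (Suc M)" using un C'(1) by force
  qed
  then show ?thesis by (intro exI[of _ "1 / real (Suc M)"]) auto
qed

lemma rational_ip:
  assumes "rational_dir u"
  obtains p q :: int where "(p, q) \<noteq> (0, 0)"
    "\<And>x. ip x u = real_of_int (p * fst x + q * snd x) / sqrt (real_of_int (p\<^sup>2 + q\<^sup>2))"
    "sqrt (real_of_int (p\<^sup>2 + q\<^sup>2)) \<ge> 1"
proof -
  obtain p q :: int where pq: "(p, q) \<noteq> (0, 0)"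
    "u = (real_of_int p / sqrt (real_of_int (p^2 + q^2)), real_of_int q / sqrt (real_of_int (p^2 + q^2)))"
    using assms unfolding rational_dir_def by blast
  have "p\<^sup>2 + q\<^sup>2 \<noteq> 0" using pq(1) by auto
  moreover have "p\<^sup>2 + q\<^sup>2 \<ge> 0" by simp
  ultimately have "p\<^sup>2 + q\<^sup>2 \<ge> 1" by linarith
  then have "(1::real) \<le> real_of_int (p\<^sup>2 + q\<^sup>2)" by (metis of_int_1 of_int_le_iff)
  then have "sqrt (real_of_int (p\<^sup>2 + q\<^sup>2)) \<ge> 1" by (rule real_sqrt_ge_one)
  moreover have "ip x u = real_of_int (p * fst x + q * snd x) / sqrt (real_of_int (p\<^sup>2 + q\<^sup>2))" for x
    unfolding ip_def pq(2) by (simp add: field_simps add_divide_distrib)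
  ultimately show ?thesis using that pq(1) by blast
qed

lemma rational_vec:
  assumes "rational_dir u" shows "\<exists>v. ip v u \<ge> 1"
proof -
  obtain p q where pq: "(p, q) \<noteq> (0, 0)"
    "\<And>x. ip x u = real_of_int (p * fst x + q * snd x) / sqrt (real_of_int (p\<^sup>2 + q\<^sup>2))"
    "sqrt (real_of_int (p\<^sup>2 + q\<^sup>2)) \<ge> 1"
    using rational_ip[OF assms] by blast
  have "ip (p, q) u = real_of_int (p\<^sup>2 + q\<^sup>2) / sqrt (real_of_int (p\<^sup>2 + q\<^sup>2))"
    using pq(2)[of "(p,q)"] by (simp add: power2_eq_square)
  also have "\<dots> = sqrt (real_of_int (p\<^sup>2 + q\<^sup>2))"
    by (subst real_div_sqrt) auto
  finally have "ip (p, q) u = sqrt (real_of_int (p\<^sup>2 + q\<^sup>2))" .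
  then have "ip (p, q) u \<ge> 1" using pq(3) by linarith
  then show ?thesis by blast
qed

definition smul :: "int \<Rightarrow> site \<Rightarrow> site" where "smul k v = (k * fst v, k * snd v)"

lemma ip_smul: "ip (smul k v) u = real_of_int k * ip v u"
  unfolding ip_def smul_def by (simp add: algebra_simps)

lemma l1_le_2norm:
  "real_of_int (l1 w) \<le> 2 * sqrt (real_of_int ((fst w)\<^sup>2 + (snd w)\<^sup>2))"
proof -
  let ?n = "sqrt (real_of_int ((fst w)\<^sup>2 + (snd w)\<^sup>2))"
  have a: "\<bar>real_of_int (fst w)\<bar> \<le> ?n"
    by (rule real_le_rsqrt) (simp add: power2_eq_square)
  have b: "\<bar>real_of_int (snd w)\<bar> \<le> ?n"
    by (rule real_le_rsqrt) (simp add: power2_eq_square)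
  have "real_of_int (l1 w) = \<bar>real_of_int (fst w)\<bar> + \<bar>real_of_int (snd w)\<bar>" by (simp add: l1_def)
  then show ?thesis using a b by linarith
qed



lemma Hs_iff: "x \<in> Hs u a \<longleftrightarrow> ip (x - a) u < 0"
  by (simp add: Hs_def ip_def)

lemma H_iff: "x \<in> H u \<longleftrightarrow> ip x u < 0"
  by (simp add: H_def)

lemma droplet_bound:
  assumes uf: "update_family U" and fin: "finite SB"
    and stab: "\<forall>u\<in>SB. rational_dir u \<and> stable U u"
    and cov: "\<forall>w\<in>S1. \<exists>u\<in>SB. ipr u w > 0"
  shows "\<exists>C>0. \<forall>z0 (k::int). k \<ge> 0 \<longrightarrow> (\<exists>Dr. closedU U Dr \<and> (\<forall>z. l1 (z - z0) < k \<longrightarrow> z \<in> Dr)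
           \<and> (\<forall>x\<in>Dr. real_of_int (l1 (x - z0)) \<le> C * real_of_int k))"
proof -
  obtain \<delta> where \<delta>: "\<delta> > 0" "\<forall>w\<in>S1. \<exists>u\<in>SB. ipr u w \<ge> \<delta>"
    using uniform_cover[OF fin cov] by blast
  have "\<forall>u\<in>SB. \<exists>v. ip v u \<ge> 1" using stab rational_vec by blast
  then obtain vv where vv: "\<forall>u\<in>SB. ip (vv u) u \<ge> 1" by metis
  obtain Vm where Vm: "\<forall>y\<in>vv ` SB. l1 y \<le> Vm" using finite_bounded_l1[of "vv ` SB"] fin by blast
  define V where "V = max Vm 1"
  have V: "\<forall>u\<in>SB. l1 (vv u) \<le> V" "V \<ge> 1" using Vm unfolding V_def by auto
  have S1u: "u \<in> S1" if "u \<in> SB" for u using stab that unfolding stable_def by auto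
  define C where "C = 2 * real_of_int V / \<delta>"
  have Cpos: "C > 0" unfolding C_def using V(2) \<delta>(1) by simp
  show ?thesis
  proof (intro exI[of _ C] conjI allI impI Cpos)
    fix z0 :: site and k :: int assume k: "k \<ge> 0"
    define Dr where "Dr = (\<Inter>u\<in>SB. Hs u (z0 + smul k (vv u)))"
    have cl: "closedU U Dr" unfolding Dr_def
      by (rule closed_INT, rule stable_closed_Hs[OF uf]) (use stab in blast)
    have inc: "z \<in> Dr" if z: "l1 (z - z0) < k" for z
      unfolding Dr_def
    proof
      fix u assume u: "u \<in> SB"
      have "ip (z - (z0 + smul k (vv u))) u = ip (z - z0) u - real_of_int k * ip (vv u) u"
        by (simp add: ip_diff ip_add ip_smul)
      also have "\<dots> \<le> real_of_int (l1 (z - z0)) - real_of_int k"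
      proof -
        have "ip (z - z0) u \<le> real_of_int (l1 (z - z0))" using ip_l1[OF S1u[OF u]] by (metis abs_le_D1)
        moreover have "real_of_int k * ip (vv u) u \<ge> real_of_int k"
          using vv u k by (metis mult.right_neutral mult_left_mono of_int_0_le_iff)
        ultimately show ?thesis by linarith
      qed
      also have "\<dots> < 0" using z by simp
      finally show "z \<in> Hs u (z0 + smul k (vv u))" unfolding Hs_iff .
    qed
    have bd: "real_of_int (l1 (x - z0)) \<le> C * real_of_int k" if x: "x \<in> Dr" for x
    proof (cases "x = z0")
      case True then show ?thesis using Cpos k by (simp add: l1_def)
    next
      case False
      define w where "w = x - z0"
      define n where "n = sqrt (real_of_int ((fst w)\<^sup>2 + (snd w)\<^sup>2))"
      have "w \<noteq> 0" using False unfolding w_def by simp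
      then have "(fst w)\<^sup>2 + (snd w)\<^sup>2 > 0"
        by (metis add_nonneg_nonneg less_le power2_less_eq_zero_iff prod_eq_iff sum_power2_eq_zero_iff zero_le_power2 fst_zero snd_zero)
      then have "real_of_int ((fst w)\<^sup>2 + (snd w)\<^sup>2) > 0" by (simp only: of_int_0_less_iff)
      then have npos: "n > 0" unfolding n_def by (rule real_sqrt_gt_zero)
      have nsq: "n\<^sup>2 = (real_of_int (fst w))\<^sup>2 + (real_of_int (snd w))\<^sup>2"
        unfolding n_def by (simp add: add_nonneg_nonneg)
      define ww where "ww = (real_of_int (fst w) / n, real_of_int (snd w) / n)"
      have "(real_of_int (fst w) / n)\<^sup>2 + (real_of_int (snd w) / n)\<^sup>2
          = ((real_of_int (fst w))\<^sup>2 + (real_of_int (snd w))\<^sup>2) / n\<^sup>2"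
        by (simp add: power_divide add_divide_distrib)
      also have "\<dots> = 1" by (subst nsq[symmetric]) (use npos in simp)
      finally have "ww \<in> S1" unfolding S1_def ww_def by simp
      then obtain u where u: "u \<in> SB" "ipr u ww \<ge> \<delta>" using \<delta>(2) by blast
      have "ipr u ww = ip w u / n" unfolding ipr_def ip_def ww_def by (simp add: add_divide_distrib mult.commute)
      then have "n * ipr u ww = ip w u" using npos by (simp add: field_simps)
      moreover have "\<delta> * n \<le> ipr u ww * n" using u(2) npos by (simp add: mult_right_mono)
      ultimately have lo: "ip w u \<ge> \<delta> * n" by (simp add: mult.commute)
      have "x \<in> Hs u (z0 + smul k (vv u))" using x u unfolding Dr_def by blast
      then have "ip (x - (z0 + smul k (vv u))) u < 0" unfolding Hs_iff .
      then have "ip w u < real_of_int k * ip (vv u) u"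
        unfolding w_def by (simp add: ip_diff ip_add ip_smul)
      also have "\<dots> \<le> real_of_int k * real_of_int V"
      proof -
        have "ip (vv u) u \<le> real_of_int (l1 (vv u))" using ip_l1[OF S1u[OF u(1)]] by (metis abs_le_D1)
        also have "\<dots> \<le> real_of_int V" using V u by simp
        finally show ?thesis using k by (simp add: mult_left_mono)
      qed
      finally have "\<delta> * n < real_of_int k * real_of_int V" using lo by linarith
      then have "n < real_of_int k * real_of_int V / \<delta>" using \<delta>(1) by (simp add: field_simps)
      moreover have "real_of_int (l1 w) \<le> 2 * n" unfolding n_def by (rule l1_le_2norm)
      ultimately have "real_of_int (l1 w) \<le> 2 * (real_of_int k * real_of_int V / \<delta>)" by linarith
      then show ?thesis unfolding w_def C_def by (simp add: field_simps)
    qed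
    show "\<exists>Dr. closedU U Dr \<and> (\<forall>z. l1 (z - z0) < k \<longrightarrow> z \<in> Dr) \<and>
            (\<forall>x\<in>Dr. real_of_int (l1 (x - z0)) \<le> C * real_of_int k)"
      using cl inc bd by blast
  qed
qed



lemma finite_bounded_fun: "finite (A::'a set) \<Longrightarrow> \<exists>M::int. \<forall>x\<in>A. f x < M"
proof (induction A rule: finite_induct)
  case empty then show ?case by simp
next
  case (insert a A)
  then obtain M where "\<forall>x\<in>A. f x < M" by auto
  then have "\<forall>x\<in>insert a A. f x < max M (f a + 1)" by auto
  then show ?case by blast
qed

lemma tr_inj_card: "card ((\<lambda>y. y + (v::site)) ` W) = card W"
  by (rule card_image) (simp add: inj_on_def)

lemma line_sub: "ip y u = 0 \<Longrightarrow> y \<in> lplus u \<union> lminus u"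
  unfolding lplus_def lminus_def by auto

lemma H_tr_sub:
  assumes "ip x0 u \<ge> 0" shows "H u \<subseteq> (\<lambda>y. y + x0) ` H u"
proof
  fix x assume "x \<in> H u"
  then have "x - x0 \<in> H u" using assms unfolding H_iff by (simp add: ip_diff)
  then show "x \<in> (\<lambda>y. y + x0) ` H u" by (intro image_eqI[of _ _ "x - x0"]) auto
qed

lemma closure_shift_sub:
  assumes uf: "update_family U" and x0: "ip x0 u \<ge> 0"
  shows "bp_closure U (H u \<union> W) \<subseteq> (\<lambda>y. y + x0) ` bp_closure U (H u \<union> (\<lambda>y. y + - x0) ` W)"
proof -
  have "H u \<union> W \<subseteq> (\<lambda>y. y + x0) ` (H u \<union> (\<lambda>y. y + - x0) ` W)"
  proof
    fix x assume "x \<in> H u \<union> W"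
    then show "x \<in> (\<lambda>y. y + x0) ` (H u \<union> (\<lambda>y. y + - x0) ` W)"
    proof
      assume "x \<in> H u"
      then have "x \<in> (\<lambda>y. y + x0) ` H u" using H_tr_sub[OF x0] by blast
      then show ?thesis by (rule rev_subsetD) (rule image_mono, rule Un_upper1)
    next
      assume "x \<in> W"
      then have "x + - x0 \<in> (\<lambda>y. y + - x0) ` W" by blast
      then have "x + - x0 \<in> H u \<union> (\<lambda>y. y + - x0) ` W" by blast
      then show ?thesis by (intro image_eqI[of _ _ "x + - x0"]) auto
    qed
  qed
  then have "bp_closure U (H u \<union> W) \<subseteq> bp_closure U ((\<lambda>y. y + x0) ` (H u \<union> (\<lambda>y. y + - x0) ` W))"
    by (rule bpc_mono[OF uf])
  also have "\<dots> = (\<lambda>y. y + x0) ` bp_closure U (H u \<union> (\<lambda>y. y + - x0) ` W)"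
    by (rule bpc_tr[OF uf])
  finally show ?thesis .
qed

lemma fin_config:
  assumes uf: "update_family U" and st: "stable U u" and rat: "rational_dir u"
    and linefin: "\<forall>Z. finite Z \<and> card Z \<le> m \<longrightarrow> finite (bp_closure U (H u \<union> Z) \<inter> (lplus u \<union> lminus u))"
    and W: "finite W" "card W \<le> m"
  shows "finite (bp_closure U (H u \<union> W) - H u)"
proof -
  obtain p q where pq: "(p, q) \<noteq> (0, 0)"
    "\<And>x. ip x u = real_of_int (p * fst x + q * snd x) / sqrt (real_of_int (p\<^sup>2 + q\<^sup>2))"
    "sqrt (real_of_int (p\<^sup>2 + q\<^sup>2)) \<ge> 1"
    using rational_ip[OF rat] by blast
  define N where "N = sqrt (real_of_int (p\<^sup>2 + q\<^sup>2))"
  define dd where "dd x = p * fst x + q * snd x" for x :: site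
  have ipd: "ip x u = real_of_int (dd x) / N" for x unfolding dd_def N_def using pq(2) .
  have Npos: "N > 0" using pq(3) unfolding N_def by linarith
  have ipneg: "ip x u < 0 \<longleftrightarrow> dd x < 0" for x using Npos by (simp add: ipd divide_less_0_iff)
  have ipnn: "ip x u \<ge> 0 \<longleftrightarrow> dd x \<ge> 0" for x using ipneg[of x] by linarith
  obtain K where K: "\<forall>w\<in>W. dd w < K" using finite_bounded_fun[OF W(1)] by blast
  define K' where "K' = max K 1"
  define b where "b = smul K' (p, q)"
  have pq2: "p\<^sup>2 + q\<^sup>2 \<ge> 1"
  proof -
    have "p\<^sup>2 + q\<^sup>2 \<noteq> 0" using pq(1) by auto
    moreover have "p\<^sup>2 + q\<^sup>2 \<ge> 0" by simp
    ultimately show ?thesis by linarith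
  qed
  have ddb: "dd b = K' * (p\<^sup>2 + q\<^sup>2)" unfolding b_def dd_def smul_def by (simp add: power2_eq_square algebra_simps)
  have K'1: "K' \<ge> 1" "K' \<ge> K" unfolding K'_def by auto
  have "K' * 1 \<le> K' * (p\<^sup>2 + q\<^sup>2)" using pq2 K'1 by (intro mult_left_mono) auto
  then have ddb2: "dd b \<ge> K'" unfolding ddb by simp
  have dd_diff: "dd (x - y) = dd x - dd y" for x y unfolding dd_def by (simp add: algebra_simps)
  have sub1: "H u \<union> W \<subseteq> Hs u b"
  proof
    fix x assume "x \<in> H u \<union> W"
    then have "dd x < dd b"
    proof
      assume "x \<in> H u" then have "dd x < 0" using ipneg H_iff by blast
      then show ?thesis using ddb2 K'_def by linarith
    next
      assume "x \<in> W" then show ?thesis using K ddb2 K'_def by fastforce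
    qed
    then show "x \<in> Hs u b" unfolding Hs_iff ipneg dd_diff by simp
  qed
  have cl: "bp_closure U (H u \<union> W) \<subseteq> Hs u b"
    by (rule bpc_least[OF stable_closed_Hs[OF uf st] sub1])
  define S where "S c = {x\<in>bp_closure U (H u \<union> W). dd x = c}" for c
  have Sfin: "finite (S c)" if c0: "c \<ge> 0" for c
  proof (cases "S c = {}")
    case True then show ?thesis by simp
  next
    case False
    then obtain x0 where x0: "x0 \<in> S c" by blast
    have ddx0: "dd x0 = c" using x0 unfolding S_def by simp
    then have ipx0: "ip x0 u \<ge> 0" using ipnn c0 by simp
    define W' where "W' = (\<lambda>y. y + - x0) ` W"
    have fW': "finite W'" "card W' \<le> m" unfolding W'_def using W tr_inj_card[of "- x0" W] by simp_all
    have "S c \<subseteq> (\<lambda>y. y + x0) ` (bp_closure U (H u \<union> W') \<inter> (lplus u \<union> lminus u))"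
    proof
      fix x assume x: "x \<in> S c"
      then have "x \<in> (\<lambda>y. y + x0) ` bp_closure U (H u \<union> W')"
        using closure_shift_sub[OF uf ipx0, of W] unfolding S_def W'_def by blast
      then obtain y where y: "y \<in> bp_closure U (H u \<union> W')" "x = y + x0" by blast
      have "dd y = 0" using x ddx0 y(2) unfolding S_def dd_def by (simp add: algebra_simps)
      then have "ip y u = 0" using ipd by simp
      then have "y \<in> lplus u \<union> lminus u" by (rule line_sub)
      then show "x \<in> (\<lambda>y. y + x0) ` (bp_closure U (H u \<union> W') \<inter> (lplus u \<union> lminus u))"
        using y by blast
    qed
    moreover have "finite (bp_closure U (H u \<union> W') \<inter> (lplus u \<union> lminus u))"
      using linefin fW' by blast
    ultimately show ?thesis using finite_subset by blast
  qed
  have "bp_closure U (H u \<union> W) - H u \<subseteq> (\<Union>c\<in>{0..<dd b}. S c)"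
  proof
    fix x assume x: "x \<in> bp_closure U (H u \<union> W) - H u"
    then have "dd x \<ge> 0" using ipneg H_iff by (meson DiffD2 not_less)
    moreover have "x \<in> Hs u b" using x cl by blast
    then have "dd (x - b) < 0" unfolding Hs_iff ipneg .
    then have "dd x < dd b" unfolding dd_diff by simp
    ultimately show "x \<in> (\<Union>c\<in>{0..<dd b}. S c)" using x unfolding S_def by auto
  qed
  moreover have "finite (\<Union>c\<in>{0..<dd b}. S c)" using Sfin by auto
  ultimately show ?thesis using finite_subset by blast
qed



lemma H_tr_eq:
  assumes "ip v u = 0" shows "(\<lambda>y. y + v) ` H u = H u"
proof
  show "(\<lambda>y. y + v) ` H u \<subseteq> H u"
  proof
    fix x assume "x \<in> (\<lambda>y. y + v) ` H u"
    then obtain y where "y \<in> H u" "x = y + v" by blast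
    then show "x \<in> H u" using assms unfolding H_iff by (simp add: ip_add)
  qed
  show "H u \<subseteq> (\<lambda>y. y + v) ` H u"
  proof
    fix x assume "x \<in> H u"
    then have "x - v \<in> H u" using assms unfolding H_iff by (simp add: ip_diff)
    then show "x \<in> (\<lambda>y. y + v) ` H u" by (intro image_eqI[of _ _ "x - v"]) auto
  qed
qed

lemma near_case:
  assumes uf: "update_family U" and st: "stable U u" and rat: "rational_dir u"
    and linefin: "\<forall>Z. finite Z \<and> card Z \<le> m \<longrightarrow> finite (bp_closure U (H u \<union> Z) \<inter> (lplus u \<union> lminus u))"
  shows "\<exists>Rc. \<forall>Z z1. finite Z \<and> card Z \<le> m \<and> z1 \<in> Z \<and> Z \<inter> H u = {} \<and> ip z1 u \<le> TH
            \<and> (\<forall>z\<in>Z. l1 (z - z1) \<le> L) \<longrightarrow> (\<forall>y\<in>bp_closure U (H u \<union> Z) - H u. l1 (y - z1) \<le> Rc)"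
proof -
  obtain p q where pq: "(p, q) \<noteq> (0, 0)"
    "\<And>x. ip x u = real_of_int (p * fst x + q * snd x) / sqrt (real_of_int (p\<^sup>2 + q\<^sup>2))"
    "sqrt (real_of_int (p\<^sup>2 + q\<^sup>2)) \<ge> 1"
    using rational_ip[OF rat] by blast
  define N where "N = sqrt (real_of_int (p\<^sup>2 + q\<^sup>2))"
  define P where "P = p\<^sup>2 + q\<^sup>2"
  define dd where "dd x = p * fst x + q * snd x" for x :: site
  define ss where "ss x = - q * fst x + p * snd x" for x :: site
  have ipd: "ip x u = real_of_int (dd x) / N" for x unfolding dd_def N_def using pq(2) .
  have Npos: "N > 0" using pq(3) unfolding N_def by linarith
  have ipneg: "ip x u < 0 \<longleftrightarrow> dd x < 0" for x using Npos by (simp add: ipd divide_less_0_iff)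
  have P1: "P \<ge> 1"
  proof -
    have "p\<^sup>2 + q\<^sup>2 \<noteq> 0" using pq(1) by auto
    moreover have "p\<^sup>2 + q\<^sup>2 \<ge> 0" by simp
    ultimately show ?thesis unfolding P_def by linarith
  qed
  define Dm where "Dm = \<lceil>N * TH\<rceil>"
  define A0 where "A0 = (\<bar>p\<bar> + \<bar>q\<bar>) * (\<bar>Dm\<bar> + P)"
  have F0: "l1 x \<le> 2 * A0" if "0 \<le> dd x" "dd x \<le> Dm" "0 \<le> ss x" "ss x < P" for x
  proof -
    have e1: "P * fst x = p * dd x - q * ss x" unfolding P_def dd_def ss_def by (simp add: power2_eq_square algebra_simps)
    have e2: "P * snd x = q * dd x + p * ss x" unfolding P_def dd_def ss_def by (simp add: power2_eq_square algebra_simps)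
    have bd: "\<bar>dd x\<bar> \<le> \<bar>Dm\<bar> + P" "\<bar>ss x\<bar> \<le> \<bar>Dm\<bar> + P" using that by auto
    have "\<bar>p * dd x - q * ss x\<bar> \<le> \<bar>p\<bar> * \<bar>dd x\<bar> + \<bar>q\<bar> * \<bar>ss x\<bar>"
      by (metis abs_mult abs_triangle_ineq4)
    also have "\<dots> \<le> \<bar>p\<bar> * (\<bar>Dm\<bar> + P) + \<bar>q\<bar> * (\<bar>Dm\<bar> + P)"
      using bd by (intro add_mono mult_left_mono) auto
    finally have a1: "\<bar>P * fst x\<bar> \<le> A0" unfolding e1 A0_def by (simp add: algebra_simps)
    have "\<bar>q * dd x + p * ss x\<bar> \<le> \<bar>q\<bar> * \<bar>dd x\<bar> + \<bar>p\<bar> * \<bar>ss x\<bar>"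
      by (metis abs_mult abs_triangle_ineq)
    also have "\<dots> \<le> \<bar>q\<bar> * (\<bar>Dm\<bar> + P) + \<bar>p\<bar> * (\<bar>Dm\<bar> + P)"
      using bd by (intro add_mono mult_left_mono) auto
    finally have a2: "\<bar>P * snd x\<bar> \<le> A0" unfolding e2 A0_def by (simp add: algebra_simps)
    have "\<bar>fst x\<bar> \<le> \<bar>P * fst x\<bar>" "\<bar>snd x\<bar> \<le> \<bar>P * snd x\<bar>" using P1 by (simp_all add: abs_mult mult_le_cancel_right1)
    then show ?thesis using a1 a2 unfolding l1_def by linarith
  qed
  define M1 where "M1 = 2 * A0 + L"
  define Fam where "Fam = {W. W \<subseteq> {x. l1 x \<le> M1} \<and> card W \<le> m}"
  have "Fam \<subseteq> Pow {x. l1 x \<le> M1}" unfolding Fam_def by blast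
  then have famfin: "finite Fam" using box_finite[of M1] by (simp add: finite_subset)
  define G where "G = (\<Union>W\<in>Fam. bp_closure U (H u \<union> W) - H u)"
  have Gfin: "finite G" unfolding G_def
  proof (rule finite_UN_I[OF famfin])
    fix W assume "W \<in> Fam"
    then have Wb: "W \<subseteq> {x. l1 x \<le> M1}" "card W \<le> m" unfolding Fam_def by auto
    have "finite W" using finite_subset[OF Wb(1) box_finite] .
    then show "finite (bp_closure U (H u \<union> W) - H u)" using fin_config[OF uf st rat linefin _ Wb(2)] by blast
  qed
  obtain M2 where M2: "\<forall>y\<in>G. l1 y \<le> M2" using finite_bounded_l1[OF Gfin] by blast
  show ?thesis
  proof (intro exI[of _ "M2 + 2 * A0"] allI impI ballI)
    fix Z z1 y
    assume h: "finite Z \<and> card Z \<le> m \<and> z1 \<in> Z \<and> Z \<inter> H u = {} \<and> ip z1 u \<le> TH \<and> (\<forall>z\<in>Z. l1 (z - z1) \<le> L)"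
      and y: "y \<in> bp_closure U (H u \<union> Z) - H u"
    define t where "t = (- q, p)"
    define j where "j = ss z1 div P"
    define v where "v = smul j t"
    have ddv: "dd v = 0" unfolding v_def t_def smul_def dd_def by (simp add: algebra_simps)
    have ssv: "ss v = j * P" unfolding v_def t_def smul_def ss_def P_def by (simp add: power2_eq_square algebra_simps)
    have dd_diff: "dd (x - w) = dd x - dd w" for x w unfolding dd_def by (simp add: algebra_simps)
    have ss_diff: "ss (x - w) = ss x - ss w" for x w unfolding ss_def by (simp add: algebra_simps)
    have ipv: "ip v u = 0" using ddv ipd by simp
    define z1' where "z1' = z1 - v"
    have "z1 \<notin> H u" using h by blast
    then have "\<not> dd z1 < 0" using ipneg H_iff by blast
    then have "dd z1 \<ge> 0" by simp
    moreover have "dd z1 \<le> Dm"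
    proof -
      have "real_of_int (dd z1) / N \<le> TH" using h ipd by simp
      then have "real_of_int (dd z1) \<le> N * TH" using Npos by (simp add: field_simps)
      then show ?thesis unfolding Dm_def by linarith
    qed
    moreover have "ss z1' = ss z1 mod P" unfolding z1'_def ss_diff ssv j_def
      by (simp add: minus_div_mult_eq_mod)
    then have "0 \<le> ss z1'" "ss z1' < P" using P1 by simp_all
    ultimately have z1'b: "l1 z1' \<le> 2 * A0" using F0[of z1'] unfolding z1'_def dd_diff ddv by simp
    define Z' where "Z' = (\<lambda>x. x + - v) ` Z"
    have HZ': "(\<lambda>x. x + - v) ` (H u \<union> Z) = H u \<union> Z'"
      unfolding Z'_def image_Un using H_tr_eq[of "- v" u] ipv by (simp add: ip_def)
    have "y + - v \<in> bp_closure U (H u \<union> Z')"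
      using y bpc_tr[OF uf, of "- v" "H u \<union> Z"] unfolding HZ' by blast
    moreover have "y + - v \<notin> H u"
    proof -
      have "ip (y + - v) u = ip y u" using ipv ip_diff[of y v u] by simp
      then show ?thesis using y by (simp add: H_iff)
    qed
    moreover have "Z' \<in> Fam"
    proof -
      have "card Z' \<le> m" unfolding Z'_def using tr_inj_card[of "- v" Z] h by simp
      moreover have "Z' \<subseteq> {x. l1 x \<le> M1}"
      proof
        fix x assume "x \<in> Z'"
        then obtain z where z: "z \<in> Z" "x = z + - v" unfolding Z'_def by blast
        have "l1 x \<le> l1 (x - z1') + l1 z1'" using l1_add[of "x - z1'" z1'] by simp
        also have "x - z1' = z - z1" unfolding z z1'_def by simp
        finally have "l1 x \<le> l1 (z - z1) + l1 z1'" .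
        moreover have "l1 (z - z1) \<le> L" using h z(1) by blast
        ultimately show "x \<in> {x. l1 x \<le> M1}" using z1'b unfolding M1_def by simp
      qed
      ultimately show ?thesis unfolding Fam_def by blast
    qed
    ultimately have "y + - v \<in> G" unfolding G_def by blast
    then have "l1 (y + - v) \<le> M2" using M2 by blast
    moreover have "l1 (y - z1) \<le> l1 (y + - v) + l1 (- z1')"
      using l1_add[of "y + - v" "- z1'"] unfolding z1'_def by (simp add: algebra_simps)
    ultimately show "l1 (y - z1) \<le> M2 + 2 * A0" using z1'b l1_minus[of z1'] by linarith
  qed
qed



lemma split_case:
  assumes uf: "update_family U" and st: "stable U u" and r: "\<forall>X\<in>U. \<forall>v\<in>X. l1 v \<le> r"
    and IH: "\<forall>Z'. finite Z' \<and> card Z' \<le> m \<longrightarrow> (\<forall>y\<in>bp_closure U (H u \<union> Z') - H u. \<exists>z\<in>Z'. l1 (y - z) \<le> R')"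
    and fin: "finite Z" and K: "K \<subseteq> Z" "card K \<le> m" "card (Z - K) \<le> m"
    and cross: "\<forall>k\<in>K. \<forall>k'\<in>Z - K. l1 (k - k') > 2 * R' + 2 * r"
  shows "\<forall>y\<in>bp_closure U (H u \<union> Z) - H u. \<exists>z\<in>Z. l1 (y - z) \<le> R'"
proof -
  define C1 where "C1 = bp_closure U (H u \<union> K)"
  define C2 where "C2 = bp_closure U (H u \<union> (Z - K))"
  have fK: "finite K" "finite (Z - K)" using fin K(1) finite_subset by auto
  have "finite K \<and> card K \<le> m" using fK K by simp
  from IH[THEN spec, of K, THEN mp, OF this]
  have IH1: "\<forall>y\<in>C1 - H u. \<exists>z\<in>K. l1 (y - z) \<le> R'" unfolding C1_def .
  have "finite (Z - K) \<and> card (Z - K) \<le> m" using fK K by simp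
  from IH[THEN spec, of "Z - K", THEN mp, OF this]
  have IH2: "\<forall>y\<in>C2 - H u. \<exists>z\<in>Z - K. l1 (y - z) \<le> R'" unfolding C2_def .
  have H1: "H u \<subseteq> C1" unfolding C1_def using sub_closure[of "H u \<union> K" U] by blast
  have H2: "H u \<subseteq> C2" unfolding C2_def using sub_closure[of "H u \<union> (Z - K)" U] by blast
  have cl: "closedU U (C1 \<union> C2)"
  proof (rule closed_union_l1[OF _ _ r])
    show "closedU U C1" "closedU U C2" unfolding C1_def C2_def by (rule bpc_closed[OF uf])+
    fix p q assume p: "p \<in> C1 - C2" and q: "q \<in> C2 - C1"
    then have "p \<in> C1 - H u" "q \<in> C2 - H u" using H1 H2 by auto
    then obtain k k' where k: "k \<in> K" "l1 (p - k) \<le> R'" and k': "k' \<in> Z - K" "l1 (q - k') \<le> R'"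
      using IH1 IH2 by blast
    have "l1 (k - k') \<le> l1 (k - p) + l1 (p - k')" by (rule l1_tri)
    also have "l1 (p - k') \<le> l1 (p - q) + l1 (q - k')" by (rule l1_tri)
    finally have "l1 (k - k') \<le> l1 (p - k) + l1 (p - q) + R'"
      using k' l1_diff_comm[of k p] by linarith
    then have "l1 (k - k') \<le> l1 (p - q) + 2 * R'" using k by linarith
    moreover have "l1 (k - k') > 2 * R' + 2 * r" using cross k(1) k'(1) by blast
    ultimately show "l1 (p - q) > 2 * r" by linarith
  qed
  have "H u \<union> Z \<subseteq> C1 \<union> C2"
  proof
    fix x assume "x \<in> H u \<union> Z"
    then have "x \<in> H u \<union> K \<or> x \<in> H u \<union> (Z - K)" by blast
    then show "x \<in> C1 \<union> C2" unfolding C1_def C2_def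
      using sub_closure[of "H u \<union> K" U] sub_closure[of "H u \<union> (Z - K)" U] by blast
  qed
  then have sub: "bp_closure U (H u \<union> Z) \<subseteq> C1 \<union> C2" by (rule bpc_least[OF cl])
  show ?thesis
  proof
    fix y assume y: "y \<in> bp_closure U (H u \<union> Z) - H u"
    then have "y \<in> C1 - H u \<or> y \<in> C2 - H u" using sub by blast
    then show "\<exists>z\<in>Z. l1 (y - z) \<le> R'"
    proof
      assume "y \<in> C1 - H u" then show ?thesis using IH1 K(1) by blast
    next
      assume "y \<in> C2 - H u" then show ?thesis using IH2 by blast
    qed
  qed
qed

lemma far_case:
  assumes uf: "update_family U" and st: "stable U u" and r: "\<forall>X\<in>U. \<forall>v\<in>X. l1 v \<le> r"
    and cl: "closedU U Dr" and sub: "Z \<subseteq> Dr" and far: "\<forall>x\<in>Dr. ip x u > 2 * real_of_int r"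
  shows "bp_closure U (H u \<union> Z) - H u \<subseteq> Dr"
proof -
  have S1u: "u \<in> S1" using st unfolding stable_def by simp
  have c: "closedU U (H u \<union> Dr)"
  proof (rule closed_union_l1[OF stable_closed[OF uf st] cl r])
    fix p q assume p: "p \<in> H u - Dr" and q: "q \<in> Dr - H u"
    have "ip p u < 0" using p H_iff by blast
    moreover have "ip q u > 2 * real_of_int r" using q far by blast
    moreover have "ip q u - ip p u \<le> real_of_int (l1 (q - p))"
      using ip_l1[OF S1u, of "q - p"] ip_diff[of q p u] by linarith
    ultimately have "real_of_int (l1 (q - p)) > 2 * real_of_int r" by linarith
    then show "l1 (p - q) > 2 * r" using l1_diff_comm[of p q] by simp
  qed
  have "H u \<union> Z \<subseteq> H u \<union> Dr" using sub by blast
  then have "bp_closure U (H u \<union> Z) \<subseteq> H u \<union> Dr" by (rule bpc_least[OF c])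
  then show ?thesis by blast
qed



lemma core:
  assumes uf: "update_family U" and fin: "finite SB"
    and stabSB: "\<forall>u'\<in>SB. rational_dir u' \<and> stable U u'"
    and cov: "\<forall>w\<in>S1. \<exists>u'\<in>SB. ipr u' w > 0"
    and st: "stable U u" and rat: "rational_dir u"
    and linefin: "\<forall>Z. finite Z \<and> card Z \<le> m0 \<longrightarrow> finite (bp_closure U (H u \<union> Z) \<inter> (lplus u \<union> lminus u))"
  shows "m \<le> m0 \<Longrightarrow> \<exists>R. \<forall>Z. finite Z \<and> card Z \<le> m \<longrightarrow> (\<forall>y\<in>bp_closure U (H u \<union> Z) - H u. \<exists>z\<in>Z. l1 (y - z) \<le> R)"
proof (induction m)
  case 0
  have "\<forall>Z. finite Z \<and> card Z \<le> 0 \<longrightarrow> (\<forall>y\<in>bp_closure U (H u \<union> Z) - H u. \<exists>z\<in>Z. l1 (y - z) \<le> 0)"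
  proof (intro allI impI)
    fix Z :: "site set" assume "finite Z \<and> card Z \<le> 0"
    then have "Z = {}" using card_0_eq by auto
    then have "bp_closure U (H u \<union> Z) - H u = {}" using st unfolding stable_def by simp
    then show "\<forall>y\<in>bp_closure U (H u \<union> Z) - H u. \<exists>z\<in>Z. l1 (y - z) \<le> 0" by blast
  qed
  then show ?case by blast
next
  case (Suc m)
  then obtain R0 where R0: "\<forall>Z. finite Z \<and> card Z \<le> m \<longrightarrow> (\<forall>y\<in>bp_closure U (H u \<union> Z) - H u. \<exists>z\<in>Z. l1 (y - z) \<le> R0)"
    by auto
  define R' where "R' = max R0 0"
  have R'0: "R' \<ge> 0" unfolding R'_def by simp
  have IH: "\<forall>Z. finite Z \<and> card Z \<le> m \<longrightarrow> (\<forall>y\<in>bp_closure U (H u \<union> Z) - H u. \<exists>z\<in>Z. l1 (y - z) \<le> R')"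
  proof (intro allI impI ballI)
    fix Z y assume "finite Z \<and> card Z \<le> m" "y \<in> bp_closure U (H u \<union> Z) - H u"
    then obtain z where "z \<in> Z" "l1 (y - z) \<le> R0" using R0 by blast
    then show "\<exists>z\<in>Z. l1 (y - z) \<le> R'" unfolding R'_def by force
  qed
  obtain r where r: "r \<ge> 0" "\<forall>X\<in>U. \<forall>v\<in>X. l1 v \<le> r" using rule_radius[OF uf] by blast
  obtain C where C: "C > 0" "\<forall>z0 (k::int). k \<ge> 0 \<longrightarrow> (\<exists>Dr. closedU U Dr \<and> (\<forall>z. l1 (z - z0) < k \<longrightarrow> z \<in> Dr)
           \<and> (\<forall>x\<in>Dr. real_of_int (l1 (x - z0)) \<le> C * real_of_int k))"
    using droplet_bound[OF uf fin stabSB cov] by blast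
  define T where "T = 2 * R' + 2 * r"
  have T0: "T \<ge> 0" unfolding T_def using R'0 r by simp
  define k where "k = int (Suc m) * T + 1"
  have k0: "k \<ge> 0" unfolding k_def using T0 by simp
  define TH where "TH = C * real_of_int k + 2 * real_of_int r + 1"
  have linefin': "\<forall>Z. finite Z \<and> card Z \<le> Suc m \<longrightarrow> finite (bp_closure U (H u \<union> Z) \<inter> (lplus u \<union> lminus u))"
    using linefin Suc.prems by auto
  obtain Rc where Rc: "\<forall>Z z1. finite Z \<and> card Z \<le> Suc m \<and> z1 \<in> Z \<and> Z \<inter> H u = {} \<and> ip z1 u \<le> TH
            \<and> (\<forall>z\<in>Z. l1 (z - z1) \<le> 2 * (int (Suc m) * T)) \<longrightarrow> (\<forall>y\<in>bp_closure U (H u \<union> Z) - H u. l1 (y - z1) \<le> Rc)"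
    using near_case[OF uf st rat linefin', of TH "2 * (int (Suc m) * T)"] by blast
  define Rd where "Rd = \<lceil>C * real_of_int k\<rceil>"
  define R where "R = max R' (max Rc Rd)"
  have S1u: "u \<in> S1" using st unfolding stable_def by simp
  have "\<forall>Z. finite Z \<and> card Z \<le> Suc m \<longrightarrow> (\<forall>y\<in>bp_closure U (H u \<union> Z) - H u. \<exists>z\<in>Z. l1 (y - z) \<le> R)"
  proof (intro allI impI ballI)
    fix Z y assume Z: "finite Z \<and> card Z \<le> Suc m" and y: "y \<in> bp_closure U (H u \<union> Z) - H u"
    define Z0 where "Z0 = Z - H u"
    have HZ: "H u \<union> Z = H u \<union> Z0" unfolding Z0_def by blast
    have y0: "y \<in> bp_closure U (H u \<union> Z0) - H u" using y unfolding HZ .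
    have fZ0: "finite Z0" using Z unfolding Z0_def by simp
    have cZ0: "card Z0 \<le> Suc m"
      using Z card_mono[of Z Z0] unfolding Z0_def by (meson Diff_subset order_trans)
    have dZ0: "Z0 \<inter> H u = {}" unfolding Z0_def by blast
    have sZ0: "Z0 \<subseteq> Z" unfolding Z0_def by blast
    have "Z0 \<noteq> {}"
    proof
      assume "Z0 = {}"
      then have "bp_closure U (H u \<union> Z0) = H u" using st unfolding stable_def by simp
      then show False using y0 by blast
    qed
    then obtain z0 where z0: "z0 \<in> Z0" by blast
    from connect_or_split[OF fZ0 z0 T0]
    have "\<exists>z\<in>Z0. l1 (y - z) \<le> R"
    proof
      assume "\<exists>K. K \<subseteq> Z0 \<and> K \<noteq> {} \<and> K \<noteq> Z0 \<and> (\<forall>k\<in>K. \<forall>k'\<in>Z0 - K. l1 (k - k') > T)"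
      then obtain K where K: "K \<subseteq> Z0" "K \<noteq> {}" "K \<noteq> Z0" "\<forall>k\<in>K. \<forall>k'\<in>Z0 - K. l1 (k - k') > T" by blast
      have "card K < card Z0" using psubset_card_mono[OF fZ0] K by blast
      then have cK: "card K \<le> m" using cZ0 by simp
      have "Z0 - K \<subset> Z0" using K by blast
      then have "card (Z0 - K) < card Z0" using psubset_card_mono[OF fZ0] by blast
      then have cK2: "card (Z0 - K) \<le> m" using cZ0 by simp
      have cross: "\<forall>k\<in>K. \<forall>k'\<in>Z0 - K. l1 (k - k') > 2 * R' + 2 * r" using K(4) unfolding T_def .
      have "\<forall>y\<in>bp_closure U (H u \<union> Z0) - H u. \<exists>z\<in>Z0. l1 (y - z) \<le> R'"
        by (rule split_case[OF uf st r(2) IH fZ0 K(1) cK cK2 cross])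
      then obtain z where "z \<in> Z0" "l1 (y - z) \<le> R'" using y0 by blast
      then show ?thesis unfolding R_def by force
    next
      assume conn: "\<forall>z\<in>Z0. l1 (z - z0) \<le> int (card Z0) * T"
      have conn': "\<forall>z\<in>Z0. l1 (z - z0) \<le> int (Suc m) * T"
      proof
        fix z assume "z \<in> Z0"
        then have "l1 (z - z0) \<le> int (card Z0) * T" using conn by blast
        also have "\<dots> \<le> int (Suc m) * T" using cZ0 T0 by (intro mult_right_mono) auto
        finally show "l1 (z - z0) \<le> int (Suc m) * T" .
      qed
      show ?thesis
      proof (cases "\<exists>z1\<in>Z0. ip z1 u \<le> TH")
        case True
        then obtain z1 where z1: "z1 \<in> Z0" "ip z1 u \<le> TH" by blast
        have "\<forall>z\<in>Z0. l1 (z - z1) \<le> 2 * (int (Suc m) * T)"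
        proof
          fix z assume z: "z \<in> Z0"
          have "l1 (z - z1) \<le> l1 (z - z0) + l1 (z0 - z1)" by (rule l1_tri)
          also have "l1 (z0 - z1) = l1 (z1 - z0)" by (rule l1_diff_comm)
          finally have "l1 (z - z1) \<le> l1 (z - z0) + l1 (z1 - z0)" .
          moreover have "l1 (z - z0) \<le> int (Suc m) * T" "l1 (z1 - z0) \<le> int (Suc m) * T"
            using conn' z z1(1) by blast+
          ultimately show "l1 (z - z1) \<le> 2 * (int (Suc m) * T)" by linarith
        qed
        then have "l1 (y - z1) \<le> Rc" using Rc fZ0 cZ0 z1 dZ0 y0 by blast
        then show ?thesis using z1(1) unfolding R_def by force
      next
        case False
        then have far0: "\<forall>z\<in>Z0. ip z u > TH" by force
        obtain Dr where Dr: "closedU U Dr" "\<forall>z. l1 (z - z0) < k \<longrightarrow> z \<in> Dr"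
          "\<forall>x\<in>Dr. real_of_int (l1 (x - z0)) \<le> C * real_of_int k"
          using C(2) k0 by blast
        have sub: "Z0 \<subseteq> Dr"
        proof
          fix z assume "z \<in> Z0"
          then have "l1 (z - z0) < k" using conn' unfolding k_def by fastforce
          then show "z \<in> Dr" using Dr(2) by blast
        qed
        have far: "\<forall>x\<in>Dr. ip x u > 2 * real_of_int r"
        proof
          fix x assume x: "x \<in> Dr"
          have "ip z0 u - ip x u \<le> real_of_int (l1 (z0 - x))"
            using ip_l1[OF S1u, of "z0 - x"] ip_diff[of z0 x u] by linarith
          also have "\<dots> = real_of_int (l1 (x - z0))" using l1_diff_comm[of z0 x] by simp
          also have "\<dots> \<le> C * real_of_int k" using Dr(3) x by blast
          finally have "ip x u \<ge> ip z0 u - C * real_of_int k" by linarith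
          moreover have "ip z0 u > TH" using far0 z0 by blast
          ultimately show "ip x u > 2 * real_of_int r" unfolding TH_def by linarith
        qed
        have "y \<in> Dr" using far_case[OF uf st r(2) Dr(1) sub far] y0 by blast
        then have "real_of_int (l1 (y - z0)) \<le> C * real_of_int k" using Dr(3) by blast
        then have "l1 (y - z0) \<le> Rd" unfolding Rd_def by linarith
        then show ?thesis using z0 unfolding R_def by force
      qed
    qed
    then show "\<exists>z\<in>Z. l1 (y - z) \<le> R" using sZ0 by blast
  qed
  then show ?case by blast
qed



lemma Min_union_dom:
  fixes f :: "'a \<Rightarrow> real"
  assumes "finite A" "A \<noteq> {}" "finite B" "\<forall>b\<in>B. \<forall>a\<in>A. f a \<le> f b"
  shows "Min (f ` (A \<union> B)) = Min (f ` A)"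
proof (rule antisym)
  show "Min (f ` (A \<union> B)) \<le> Min (f ` A)"
    using assms by (intro Min_antimono) auto
  show "Min (f ` A) \<le> Min (f ` (A \<union> B))"
  proof (subst Min_ge_iff)
    show "finite (f ` (A \<union> B))" "f ` (A \<union> B) \<noteq> {}" using assms by auto
    show "\<forall>x\<in>f ` (A \<union> B). Min (f ` A) \<le> x"
    proof
      fix x assume "x \<in> f ` (A \<union> B)"
      then obtain c where c: "c \<in> A \<union> B" "x = f c" by blast
      obtain a0 where a0: "a0 \<in> A" using assms(2) by blast
      have m0: "Min (f ` A) \<le> f a0" using assms(1) a0 by simp
      show "Min (f ` A) \<le> x"
      proof (cases "c \<in> A")
        case True then show ?thesis using c assms(1) by simp
      next
        case False then have "c \<in> B" using c by blast
        then show ?thesis using m0 assms(4) a0 c by fastforce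
      qed
    qed
  qed
qed

lemma pad:
  assumes rat: "rational_dir u" and S1u: "u \<in> S1" and fY: "finite Y'" and Yne: "Y' \<noteq> {}" and cY: "card Y' \<le> n0"
  shows "\<exists>Z. finite Z \<and> card Z = n0 \<and> Y' \<subseteq> Z \<and> Z - Y' \<subseteq> H u \<and> Defs.setdist x' Z = Defs.setdist x' Y'"
proof -
  obtain p q where pq: "(p, q) \<noteq> (0, 0)"
    "\<And>x. ip x u = real_of_int (p * fst x + q * snd x) / sqrt (real_of_int (p\<^sup>2 + q\<^sup>2))"
    "sqrt (real_of_int (p\<^sup>2 + q\<^sup>2)) \<ge> 1"
    using rational_ip[OF rat] by blast
  have P1: "p\<^sup>2 + q\<^sup>2 \<ge> 1"
  proof -
    have "p\<^sup>2 + q\<^sup>2 \<noteq> 0" using pq(1) by auto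
    moreover have "p\<^sup>2 + q\<^sup>2 \<ge> 0" by simp
    ultimately show ?thesis by linarith
  qed
  have ippq: "ip (p, q) u \<ge> 1"
  proof -
    have "ip (p, q) u = real_of_int (p\<^sup>2 + q\<^sup>2) / sqrt (real_of_int (p\<^sup>2 + q\<^sup>2))"
      using pq(2)[of "(p,q)"] by (simp add: power2_eq_square)
    also have "\<dots> = sqrt (real_of_int (p\<^sup>2 + q\<^sup>2))" by (subst real_div_sqrt) auto
    finally show ?thesis using pq(3) by linarith
  qed
  obtain Kr where Kr: "\<forall>y\<in>Y'. \<lceil>sdist x' y\<rceil> < Kr" using finite_bounded_fun[OF fY, of "\<lambda>y. \<lceil>sdist x' y\<rceil>"] by blast
  define Kp where "Kp = max Kr (l1 x' + 1)"
  have Kp: "Kp \<ge> Kr" "Kp > l1 x'" "Kp \<ge> 1" unfolding Kp_def using l1_nonneg[of x'] by auto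
  define n where "n = n0 - card Y'"
  define g where "g i = x' - smul (Kp + int i) (p, q)" for i :: nat
  define P where "P = g ` {..<n}"
  have ginj: "inj_on g {..<n}"
  proof (rule inj_onI)
    fix i j assume "g i = g j"
    then have e: "(Kp + int i) * p = (Kp + int j) * p" "(Kp + int i) * q = (Kp + int j) * q"
      unfolding g_def smul_def by (auto simp: prod_eq_iff)
    show "i = j"
    proof (cases "p = 0")
      case True then have "q \<noteq> 0" using pq(1) by auto
      then show ?thesis using e(2) by simp
    next
      case False then show ?thesis using e(1) by simp
    qed
  qed
  have gsd: "sdist x' (g i) \<ge> real_of_int (Kp + int i)" for i
  proof -
    let ?j = "Kp + int i"
    have "sdist x' (g i) = sqrt (real_of_int ((?j * p)\<^sup>2 + (?j * q)\<^sup>2))"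
      unfolding sdist_def g_def smul_def by simp
    moreover have "real_of_int ?j \<le> sqrt (real_of_int ((?j * p)\<^sup>2 + (?j * q)\<^sup>2))"
    proof (rule real_le_rsqrt)
      have "?j\<^sup>2 * 1 \<le> ?j\<^sup>2 * (p\<^sup>2 + q\<^sup>2)" using P1 by (intro mult_left_mono) auto
      moreover have eqj: "(jj::int)\<^sup>2 * (p\<^sup>2 + q\<^sup>2) = (jj * p)\<^sup>2 + (jj * q)\<^sup>2" for jj
        by (simp add: power2_eq_square algebra_simps)
      ultimately have "?j\<^sup>2 \<le> (?j * p)\<^sup>2 + (?j * q)\<^sup>2" using eqj[of ?j] by linarith
      then show "(real_of_int ?j)\<^sup>2 \<le> real_of_int ((?j * p)\<^sup>2 + (?j * q)\<^sup>2)"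
        by (metis of_int_le_iff of_int_power)
    qed
    ultimately show ?thesis by simp
  qed
  have gH: "g i \<in> H u" for i
  proof -
    have S: "ip (g i) u = ip x' u - real_of_int (Kp + int i) * ip (p, q) u"
      unfolding g_def by (simp add: ip_diff ip_smul)
    have "ip x' u \<le> real_of_int (l1 x')"
    proof -
      have "ip x' u = real_of_int (p * fst x' + q * snd x') / sqrt (real_of_int (p\<^sup>2 + q\<^sup>2))" by (rule pq(2))
      show ?thesis using S1u ip_l1[of u x'] by linarith
    qed
    moreover have "real_of_int (Kp + int i) * ip (p, q) u \<ge> real_of_int (Kp + int i)"
      using ippq Kp(3) by (metis le_add_same_cancel1 mult.right_neutral mult_left_mono of_int_0_le_iff of_nat_0_le_iff order_trans zero_le_one)
    moreover have "real_of_int (Kp + int i) > real_of_int (l1 x')" using Kp(2) by simp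
    ultimately have "ip (g i) u < 0" unfolding S by linarith
    then show ?thesis unfolding H_iff .
  qed
  have gnot: "g i \<notin> Y'" for i
  proof
    assume "g i \<in> Y'"
    then have "\<lceil>sdist x' (g i)\<rceil> < Kr" using Kr by blast
    then have "sdist x' (g i) < real_of_int Kr" by linarith
    moreover have "real_of_int Kr \<le> real_of_int (Kp + int i)" using Kp(1) by simp
    ultimately show False using gsd[of i] by linarith
  qed
  define Z where "Z = Y' \<union> P"
  have fP: "finite P" unfolding P_def by simp
  have cP: "card P = n" unfolding P_def using card_image[OF ginj] by simp
  have disj: "Y' \<inter> P = {}" unfolding P_def using gnot by blast
  have cZ: "card Z = n0" unfolding Z_def using card_Un_disjoint[OF fY fP disj] cP cY n_def by simp
  have ZH: "Z - Y' \<subseteq> H u" unfolding Z_def P_def using gH by blast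
  have dom: "\<forall>b\<in>P. \<forall>a\<in>Y'. sdist x' a \<le> sdist x' b"
  proof (intro ballI)
    fix b a assume b: "b \<in> P" and a: "a \<in> Y'"
    then obtain i where i: "b = g i" unfolding P_def by blast
    have "\<lceil>sdist x' a\<rceil> < Kr" using Kr a by blast
    then have "sdist x' a < real_of_int Kr" by linarith
    also have "\<dots> \<le> real_of_int (Kp + int i)" using Kp(1) by simp
    also have "\<dots> \<le> sdist x' b" using gsd i by simp
    finally show "sdist x' a \<le> sdist x' b" by simp
  qed
  have "Defs.setdist x' Z = Defs.setdist x' Y'" unfolding Defs.setdist_def Z_def
    by (rule Min_union_dom[OF fY Yne fP dom])
  then show ?thesis using fY fP cZ ZH unfolding Z_def by blast
qed

lemma alpha_fin:
  assumes "alpha_side U L u \<ge> enat a" "finite Z" "card Z < a"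
  shows "finite (bp_closure U (H u \<union> Z) \<inter> L)"
proof (rule ccontr)
  assume "infinite (bp_closure U (H u \<union> Z) \<inter> L)"
  then have "enat (card Z) \<in> {enat (card Z) | Z. finite Z \<and> infinite (bp_closure U (H u \<union> Z) \<inter> L)}"
    using assms(2) by blast
  then have "alpha_side U L u \<le> enat (card Z)" unfolding alpha_side_def by (rule Inf_lower)
  then have "enat a \<le> enat (card Z)" using assms(1) by (rule order_trans[rotated])
  then show False using assms(3) by simp
qed



lemma sdist_tr: "sdist (x + v) y = sdist x (y + - v)"
  unfolding sdist_def by (simp add: algebra_simps)

hide_const (open) Elementary_Metric_Spaces.setdist

theorem mainTheorem8:
  fixes U :: "site set set" and SB :: "dir set" and a :: nat and D Y :: "site set"
  assumes "update_family U"
    and "critical_balanced U"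
    and "alpha_U U = enat a"
    and "finite SB"
    and "\<forall>u\<in>SB. rational_dir u \<and> stable U u \<and> alpha_bar U u \<ge> enat a"
    and "\<forall>w\<in>S1. \<exists>u\<in>SB. ipr u w > 0"
    and "droplet SB D"
    and "finite Y" and "card Y \<le> a - 1"
  shows "\<forall>x \<in> bp_closure U (D \<union> Y) - D. setdist x Y \<le> rho U SB a"
proof (intro ballI)
  fix x assume x: "x \<in> bp_closure U (D \<union> Y) - D"
  note uf = assms(1)
  obtain b where D: "D = (\<Inter>u\<in>SB. Hs u (b u))" using assms(7) unfolding droplet_def by blast
  have a1: "a \<ge> 1" using assms(2,3) unfolding critical_balanced_def by (simp add: one_enat_def)
  have S: "\<forall>u\<in>SB. rational_dir u \<and> stable U u" using assms(5) by blast
  have linefin: "\<forall>Z. finite Z \<and> card Z \<le> a - 1 \<longrightarrow> finite (bp_closure U (H u \<union> Z) \<inter> (lplus u \<union> lminus u))"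
    if u: "u \<in> SB" for u
  proof (intro allI impI)
    fix Z :: "site set" assume Z: "finite Z \<and> card Z \<le> a - 1"
    then have cZ: "card Z < a" using a1 by linarith
    have ab: "alpha_bar U u \<ge> enat a" using assms(5) u by blast
    then have "alpha_plus U u \<ge> enat a" "alpha_minus U u \<ge> enat a" unfolding alpha_bar_def by auto
    then have "finite (bp_closure U (H u \<union> Z) \<inter> lplus u)" "finite (bp_closure U (H u \<union> Z) \<inter> lminus u)"
      unfolding alpha_plus_def alpha_minus_def using alpha_fin Z cZ by blast+
    then show "finite (bp_closure U (H u \<union> Z) \<inter> (lplus u \<union> lminus u))" by (simp add: Int_Un_distrib)
  qed
  have "\<forall>u\<in>SB. \<exists>R. \<forall>Z. finite Z \<and> card Z \<le> a - 1 \<longrightarrow> (\<forall>y\<in>bp_closure U (H u \<union> Z) - H u. \<exists>z\<in>Z. l1 (y - z) \<le> R)"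
  proof
    fix u assume u: "u \<in> SB"
    show "\<exists>R. \<forall>Z. finite Z \<and> card Z \<le> a - 1 \<longrightarrow> (\<forall>y\<in>bp_closure U (H u \<union> Z) - H u. \<exists>z\<in>Z. l1 (y - z) \<le> R)"
      using core[OF uf assms(4) S assms(6), of u "a - 1" "a - 1"] S u linefin[OF u] by blast
  qed
  then obtain Rf where Rf: "\<forall>u\<in>SB. \<forall>Z. finite Z \<and> card Z \<le> a - 1 \<longrightarrow> (\<forall>y\<in>bp_closure U (H u \<union> Z) - H u. \<exists>z\<in>Z. l1 (y - z) \<le> Rf u)"
    by metis
  obtain Rm where Rm0: "\<forall>u\<in>SB. Rf u < Rm" using finite_bounded_fun[OF assms(4), of Rf] by blast
  have Rm: "\<forall>u\<in>SB. \<forall>Z. finite Z \<and> card Z \<le> a - 1 \<longrightarrow> (\<forall>y\<in>bp_closure U (H u \<union> Z) - H u. \<exists>z\<in>Z. l1 (y - z) \<le> Rm)"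
  proof (intro ballI allI impI)
    fix u Z y assume "u \<in> SB" "finite Z \<and> card Z \<le> a - 1" "y \<in> bp_closure U (H u \<union> Z) - H u"
    then obtain z where "z \<in> Z" "l1 (y - z) \<le> Rf u" using Rf by blast
    then show "\<exists>z\<in>Z. l1 (y - z) \<le> Rm" using Rm0 \<open>u \<in> SB\<close> by force
  qed
  define RS where "RS = {Defs.setdist y Z | u Z y. u \<in> SB \<and> finite Z \<and> card Z = a - 1 \<and>
                       y \<in> bp_closure U (H u \<union> Z) - H u}"
  have rho: "rho U SB a = Sup RS" unfolding rho_def RS_def ..
  have bdd: "bdd_above RS"
  proof (rule bdd_aboveI)
    fix s assume "s \<in> RS"
    then obtain u Z y where h: "s = Defs.setdist y Z" "u \<in> SB" "finite Z" "card Z = a - 1"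
      "y \<in> bp_closure U (H u \<union> Z) - H u" unfolding RS_def by blast
    then obtain z where z: "z \<in> Z" "l1 (y - z) \<le> Rm" using Rm by (metis order_refl)
    have "Defs.setdist y Z \<le> sdist y z" unfolding Defs.setdist_def using h(3) z(1) by simp
    also have "\<dots> \<le> real_of_int (l1 (y - z))" by (rule sdist_l1)
    also have "\<dots> \<le> real_of_int Rm" using z(2) by simp
    finally show "s \<le> real_of_int Rm" using h(1) by simp
  qed
  have "x \<notin> D" using x by blast
  then obtain u where u: "u \<in> SB" "x \<notin> Hs u (b u)" unfolding D by blast
  define bu where "bu = b u"
  have rat: "rational_dir u" and st: "stable U u" using S u by auto
  have S1u: "u \<in> S1" using st unfolding stable_def by simp
  define Y' where "Y' = (\<lambda>y. y + - bu) ` Y"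
  have DY: "D \<union> Y \<subseteq> Hs u bu \<union> Y" unfolding D bu_def using u(1) by blast
  have eq: "Hs u bu \<union> Y = (\<lambda>y. y + bu) ` (H u \<union> Y')"
    unfolding Hs_tr Y'_def image_Un image_image by simp
  have "bp_closure U (D \<union> Y) \<subseteq> bp_closure U (Hs u bu \<union> Y)" by (rule bpc_mono[OF uf DY])
  also have "\<dots> = (\<lambda>y. y + bu) ` bp_closure U (H u \<union> Y')" unfolding eq by (rule bpc_tr[OF uf])
  finally have "x \<in> (\<lambda>y. y + bu) ` bp_closure U (H u \<union> Y')" using x by blast
  then obtain x' where x': "x' \<in> bp_closure U (H u \<union> Y')" "x = x' + bu" by blast
  have x'H: "x' \<notin> H u"
  proof
    assume "x' \<in> H u"
    then have "x \<in> Hs u bu" unfolding Hs_tr x'(2) by blast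
    then show False using u(2) unfolding bu_def by blast
  qed
  have fY': "finite Y'" unfolding Y'_def using assms(8) by simp
  have cY': "card Y' \<le> a - 1" unfolding Y'_def using tr_inj_card[of "- bu" Y] assms(9) by simp
  have "\<exists>z\<in>Y'. l1 (x' - z) \<le> Rm" using Rm u(1) fY' cY' x' x'H by blast
  then have Yne: "Y' \<noteq> {}" by blast
  obtain Z where Z: "finite Z" "card Z = a - 1" "Y' \<subseteq> Z" "Z - Y' \<subseteq> H u" "Defs.setdist x' Z = Defs.setdist x' Y'"
    using pad[OF rat S1u fY' Yne cY'] by blast
  have "H u \<union> Z = H u \<union> Y'" using Z(3,4) by blast
  then have "x' \<in> bp_closure U (H u \<union> Z) - H u" using x' x'H by simp
  then have mem: "Defs.setdist x' Z \<in> RS" unfolding RS_def using u(1) Z(1,2) by blast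
  have "Defs.setdist x Y = Defs.setdist x' Y'"
  proof -
    have "sdist x ` Y = sdist x' ` Y'" unfolding Y'_def image_image x'(2) sdist_tr ..
    then show ?thesis unfolding Defs.setdist_def by simp
  qed
  also have "\<dots> = Defs.setdist x' Z" using Z(5) by simp
  also have "\<dots> \<le> Sup RS" by (rule cSup_upper[OF mem bdd])
  finally show "Defs.setdist x Y \<le> rho U SB a" unfolding rho .
qed


end
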